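(* Let $\mathcal U=\{(\alpha,d): \alpha\in(0,1),\ d\in\mathcal D_\alpha\}$. Then $\mathcal U$ is a biconvex set (each slice $\{d:(\alpha,d)\in\mathcal U\}$ for fixed $\alpha$ and each slice $\{\alpha:(\alpha,d)\in\mathcal U\}$ for fixed $d$ is convex), $f_0^*>0$ on $\mathcal U$, and $\ln f_0^*$ is strictly biconcave on $\mathcal U$: for each fixed $\alpha$, $d\mapsto \ln f_0^*(\alpha,d)$ is strictly concave on its slice, and for each fixed $d$, $\alpha\mapsto \ln f_0^*(\alpha,d)$ is strictly concave on its slice.
   Context: All parameters $s_{\rm in},\gamma,\beta,\varphi_{\max},k_s,\rho_{\max},k_v,q_{\min},\mu_{\max}$ are strictly positive. $\varphi(s)=\frac{\varphi_{\max}s}{k_s+s}$, $\rho(v)=\frac{\rho_{\max}v}{k_v+v}$, $\mu(q)=\mu_{\max}(1-q_{\min}/q)$, with inverses $\varphi^{-1}:[0,\varphi_{\max})\to[0,\infty)$, $\mu^{-1}:[0,\mu_{\max})\to[q_{\min},\infty)$, $\rho^{-1}:[0,\rho_{\max})\to[0,\infty)$. $\psi_{\max}=\frac{\mu_{\max}\rho_{\max}}{\rho_{\max}+q_{\min}\mu_{\max}}$, $\psi^{-1}(y)=\rho^{-1}(y\,\mu^{-1}(y))$ for $y\in[0,\psi_{\max})$. For $\alpha\in(0,1)$: $\psi_\alpha^{-1}(d)=\varphi^{-1}(d/(1-\alpha))+\psi^{-1}(d)/(\alpha\beta\gamma)$ and $\mathcal{D}_\alpha=\{d\in(0,\min\{(1-\alpha)\varphi_{\max},\psi_{\max}\}):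 \psi_\alpha^{-1}(d)<s_{\rm in}\}$. $f_0^*(\alpha,d)=\frac{d\,(v_{\rm in}^*(\alpha,d)-\psi^{-1}(d))}{\mu^{-1}(d)}$ with $v_{\rm in}^*(\alpha,d)=\alpha\beta\gamma\big(s_{\rm in}-\varphi^{-1}(d/(1-\alpha))\big)$. *)

theory Defs
  imports "HOL-Analysis.Analysis"
begin

definition strictly_concave_on :: "real set \<Rightarrow> (real \<Rightarrow> real) \<Rightarrow> bool" where
  "strictly_concave_on S f \<longleftrightarrow> convex S \<and>
     (\<forall>x\<in>S. \<forall>y\<in>S. x \<noteq> y \<longrightarrow> (\<forall>u::real. 0 < u \<and> u < 1 \<longrightarrow>
        f ((1 - u) * x + u * y) > (1 - u) * f x + u * f y))"

definition phi :: "real \<Rightarrow> real \<Rightarrow> real \<Rightarrow> real" where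
  "phi phimax ks s = phimax * s / (ks + s)"

definition rho :: "real \<Rightarrow> real \<Rightarrow> real \<Rightarrow> real" where
  "rho rhomax kv v = rhomax * v / (kv + v)"

definition mu :: "real \<Rightarrow> real \<Rightarrow> real \<Rightarrow> real" where
  "mu mumax qmin q = mumax * (1 - qmin / q)"

text \<open>Inverses: phi^{-1} : [0,phimax) -> [0,inf), mu^{-1} : [0,mumax) -> [qmin,inf),
  rho^{-1} : [0,rhomax) -> [0,inf).\<close>
definition phi_inv :: "real \<Rightarrow> real \<Rightarrow> real \<Rightarrow> real" where
  "phi_inv phimax ks y = the_inv_into {0..} (phi phimax ks) y"

definition rho_inv :: "real \<Rightarrow> real \<Rightarrow> real \<Rightarrow> real" where
  "rho_inv rhomax kv y = the_inv_into {0..} (rho rhomax kv) y"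

definition mu_inv :: "real \<Rightarrow> real \<Rightarrow> real \<Rightarrow> real" where
  "mu_inv mumax qmin y = the_inv_into {qmin..} (mu mumax qmin) y"

definition psi_max :: "real \<Rightarrow> real \<Rightarrow> real \<Rightarrow> real" where
  "psi_max mumax rhomax qmin = mumax * rhomax / (rhomax + qmin * mumax)"

definition psi_inv :: "real \<Rightarrow> real \<Rightarrow> real \<Rightarrow> real \<Rightarrow> real \<Rightarrow> real" where
  "psi_inv rhomax kv mumax qmin y = rho_inv rhomax kv (y * mu_inv mumax qmin y)"

definition psi_alpha_inv ::
  "real \<Rightarrow> real \<Rightarrow> real \<Rightarrow> real \<Rightarrow> real \<Rightarrow> real \<Rightarrow> real \<Rightarrow> real \<Rightarrow> real \<Rightarrow> real \<Rightarrow> real" where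
  "psi_alpha_inv gamma beta phimax ks rhomax kv qmin mumax \<alpha> d =
     phi_inv phimax ks (d / (1 - \<alpha>)) + psi_inv rhomax kv mumax qmin d / (\<alpha> * beta * gamma)"

definition D_alpha ::
  "real \<Rightarrow> real \<Rightarrow> real \<Rightarrow> real \<Rightarrow> real \<Rightarrow> real \<Rightarrow> real \<Rightarrow> real \<Rightarrow> real \<Rightarrow> real \<Rightarrow> real set" where
  "D_alpha s_in gamma beta phimax ks rhomax kv qmin mumax \<alpha> =
     {d. 0 < d \<and> d < min ((1 - \<alpha>) * phimax) (psi_max mumax rhomax qmin) \<and>
         psi_alpha_inv gamma beta phimax ks rhomax kv qmin mumax \<alpha> d < s_in}"

definition v_in_star ::
  "real \<Rightarrow> real \<Rightarrow> real \<Rightarrow> real \<Rightarrow> real \<Rightarrow> real \<Rightarrow> real \<Rightarrow> real" where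
  "v_in_star s_in gamma beta phimax ks \<alpha> d =
     \<alpha> * beta * gamma * (s_in - phi_inv phimax ks (d / (1 - \<alpha>)))"

definition f0_star ::
  "real \<Rightarrow> real \<Rightarrow> real \<Rightarrow> real \<Rightarrow> real \<Rightarrow> real \<Rightarrow> real \<Rightarrow> real \<Rightarrow> real \<Rightarrow> real \<Rightarrow> real \<Rightarrow> real" where
  "f0_star s_in gamma beta phimax ks rhomax kv qmin mumax \<alpha> d =
     d * (v_in_star s_in gamma beta phimax ks \<alpha> d - psi_inv rhomax kv mumax qmin d)
       / mu_inv mumax qmin d"

definition U_set ::
  "real \<Rightarrow> real \<Rightarrow> real \<Rightarrow> real \<Rightarrow> real \<Rightarrow> real \<Rightarrow> real \<Rightarrow> real \<Rightarrow> real \<Rightarrow> (real \<times> real) set" where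
  "U_set s_in gamma beta phimax ks rhomax kv qmin mumax =
     {(\<alpha>, d). 0 < \<alpha> \<and> \<alpha> < 1 \<and> d \<in> D_alpha s_in gamma beta phimax ks rhomax kv qmin mumax \<alpha>}"

end

theory Submission imports Defs begin

lemma recip_gap:
  fixes X Y u :: real
  assumes "0<X" "0<Y" "0\<le>u" "u\<le>1"
  shows "(1-u)/X + u/Y - 1/((1-u)*X+u*Y) = u*(1-u)*(X-Y)^2/(X*Y*((1-u)*X+u*Y))"
proof -
  have m: "0 < (1-u)*X+u*Y"
  proof (cases "u = 0")
    case True then show ?thesis using assms by simp
  next
    case False then have "0<u" using assms by simp
    then show ?thesis using assms by (smt (verit) mult_nonneg_nonneg mult_pos_pos)
  qed
  show ?thesis using m assms by (simp add: field_simps power2_eq_square)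
qed

lemma recip_conv:
  fixes X Y u :: real
  assumes "0<X" "0<Y" "0\<le>u" "u\<le>1"
  shows "1/((1-u)*X+u*Y) \<le> (1-u)/X + u/Y"
proof -
  have m: "0 < (1-u)*X+u*Y"
    using assms by (smt (verit) mult_nonneg_nonneg mult_pos_pos mult_left_le_one_le)
  have "0 \<le> u*(1-u)*(X-Y)^2/(X*Y*((1-u)*X+u*Y))"
    using assms m by (intro divide_nonneg_pos) auto
  then show ?thesis using recip_gap[OF assms] by linarith
qed

lemma recip_strict:
  fixes X Y u :: real
  assumes "0<X" "0<Y" "0<u" "u<1" "X \<noteq> Y"
  shows "1/((1-u)*X+u*Y) < (1-u)/X + u/Y"
proof -
  have m: "0 < (1-u)*X+u*Y"
    using assms by (smt (verit) mult_pos_pos)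
  have "0 < u*(1-u)*(X-Y)^2/(X*Y*((1-u)*X+u*Y))"
    using assms m by (intro divide_pos_pos) auto
  then show ?thesis using recip_gap[of X Y u] assms by linarith
qed

lemma lf_id:
  fixes p q x :: real
  assumes "0<q" "q*x<p"
  shows "x/(p-q*x) = (p/q)*(1/(p-q*x)) - 1/q"
  using assms by (simp add: field_simps)

lemma lf_conv:
  fixes p q x y u :: real
  assumes "0<p" "0<q" "q*x<p" "q*y<p" "0\<le>u" "u\<le>1"
  shows "((1-u)*x+u*y)/(p - q*((1-u)*x+u*y)) \<le> (1-u)*(x/(p-q*x)) + u*(y/(p-q*y))"
proof -
  let ?m = "(1-u)*x+u*y"
  have e: "p - q*?m = (1-u)*(p-q*x) + u*(p-q*y)" by (simp add: algebra_simps)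
  have qm: "q*?m < p" using e assms
    by (smt (verit) mult_nonneg_nonneg mult_pos_pos mult_left_le_one_le)
  have r: "1/(p - q*?m) \<le> (1-u)/(p-q*x) + u/(p-q*y)"
    unfolding e using assms by (intro recip_conv) auto
  have "?m/(p - q*?m) = (p/q)*(1/(p-q*?m)) - 1/q" using lf_id assms qm by blast
  also have "\<dots> \<le> (p/q)*((1-u)/(p-q*x) + u/(p-q*y)) - 1/q"
    using mult_left_mono[OF r, of "p/q"] assms by simp
  also have "\<dots> = (1-u)*((p/q)*(1/(p-q*x)) - 1/q) + u*((p/q)*(1/(p-q*y)) - 1/q)"
    by (simp add: algebra_simps add_divide_distrib[symmetric])
  also have "\<dots> = (1-u)*(x/(p-q*x)) + u*(y/(p-q*y))"
    using lf_id[of q x p] lf_id[of q y p] assms by simp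
  finally show ?thesis .
qed

lemma lf_strict:
  fixes p q x y u :: real
  assumes "0<p" "0<q" "q*x<p" "q*y<p" "0<u" "u<1" "x\<noteq>y"
  shows "((1-u)*x+u*y)/(p - q*((1-u)*x+u*y)) < (1-u)*(x/(p-q*x)) + u*(y/(p-q*y))"
proof -
  let ?m = "(1-u)*x+u*y"
  have e: "p - q*?m = (1-u)*(p-q*x) + u*(p-q*y)" by (simp add: algebra_simps)
  have qm: "q*?m < p" using e assms
    by (smt (verit) mult_pos_pos)
  have r: "1/(p - q*?m) < (1-u)/(p-q*x) + u/(p-q*y)"
    unfolding e using assms by (intro recip_strict) auto
  have "?m/(p - q*?m) = (p/q)*(1/(p-q*?m)) - 1/q" using lf_id assms qm by blast
  also have "\<dots> < (p/q)*((1-u)/(p-q*x) + u/(p-q*y)) - 1/q"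
    using mult_strict_left_mono[OF r, of "p/q"] assms by simp
  also have "\<dots> = (1-u)*((p/q)*(1/(p-q*x)) - 1/q) + u*((p/q)*(1/(p-q*y)) - 1/q)"
    by (simp add: algebra_simps add_divide_distrib[symmetric])
  also have "\<dots> = (1-u)*(x/(p-q*x)) + u*(y/(p-q*y))"
    using lf_id[of q x p] lf_id[of q y p] assms by simp
  finally show ?thesis .
qed

lemma ln_lt_minus_one: "0 < (z::real) \<Longrightarrow> z \<noteq> 1 \<Longrightarrow> ln z < z - 1"
  using ln_le_minus_one ln_eq_minus_one by fastforce

lemma ln_strict:
  fixes x y u :: real
  assumes "0<x" "0<y" "x\<noteq>y" "0<u" "u<1"
  shows "(1-u)*ln x + u*ln y < ln ((1-u)*x+u*y)"
proof -
  define m where "m = (1-u)*x+u*y"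
  have m: "0<m" unfolding m_def using assms by (smt (verit) mult_pos_pos)
  have "x \<noteq> m" unfolding m_def using assms by (auto simp: algebra_simps)
  then have "x/m \<noteq> 1" using m by simp
  then have a: "ln (x/m) < x/m - 1" using m assms ln_lt_minus_one by simp
  have b: "ln (y/m) \<le> y/m - 1" using m assms ln_le_minus_one by simp
  have "(1-u)*ln (x/m) + u*ln (y/m) < (1-u)*(x/m-1) + u*(y/m-1)"
    using a b assms by (smt (verit) mult_left_mono mult_strict_left_mono)
  also have "\<dots> = 0" unfolding m_def using m[unfolded m_def]
    by (simp add: field_simps)
  finally show ?thesis using m assms by (simp add: ln_div algebra_simps m_def)
qed

lemma ln_conc:
  fixes x y u :: real
  assumes "0<x" "0<y" "0\<le>u" "u\<le>1"
  shows "(1-u)*ln x + u*ln y \<le> ln ((1-u)*x+u*y)"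
proof -
  consider "u=0" | "u=1" | "x=y" | "0<u \<and> u<1 \<and> x\<noteq>y" using assms by linarith
  then show ?thesis
  proof cases
    case 3 then show ?thesis by (simp add: algebra_simps)
  next
    case 4 then show ?thesis using ln_strict[of x y u] assms by simp
  qed auto
qed


lemma phi_inv_eq:
  fixes phimax ks y :: real
  assumes "0<phimax" "0<ks" "0\<le>y" "y<phimax"
  shows "phi_inv phimax ks y = ks*y/(phimax-y)"
proof -
  have inj: "inj_on (phi phimax ks) {0..}"
  proof (rule inj_onI)
    fix a b assume a: "a \<in> {0::real..}" and b: "b \<in> {0::real..}" and e: "phi phimax ks a = phi phimax ks b"
    then have "phimax*a*(ks+b) = phimax*b*(ks+a)" using assms by (simp add: phi_def field_simps)
    then have "phimax*ks*a = phimax*ks*b" by (simp add: algebra_simps)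
    then show "a = b" using assms by simp
  qed
  have "phi phimax ks (ks*y/(phimax-y)) = y" using assms by (simp add: phi_def field_simps)
  moreover have "ks*y/(phimax-y) \<in> {0..}" using assms by simp
  ultimately show ?thesis unfolding phi_inv_def by (rule the_inv_into_f_eq[OF inj])
qed

lemma rho_inv_eq:
  fixes rhomax kv y :: real
  assumes "0<rhomax" "0<kv" "0\<le>y" "y<rhomax"
  shows "rho_inv rhomax kv y = kv*y/(rhomax-y)"
  using phi_inv_eq[OF assms] unfolding phi_inv_def rho_inv_def phi_def rho_def .

lemma mu_inv_eq:
  fixes mumax qmin y :: real
  assumes "0<mumax" "0<qmin" "0\<le>y" "y<mumax"
  shows "mu_inv mumax qmin y = qmin*mumax/(mumax-y)"
proof -
  have inj: "inj_on (mu mumax qmin) {qmin..}"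
  proof (rule inj_onI)
    fix a b assume a: "a \<in> {qmin..}" and b: "b \<in> {qmin..}" and e: "mu mumax qmin a = mu mumax qmin b"
    then have "qmin/a = qmin/b" using assms by (simp add: mu_def)
    then show "a = b" using assms a b by (simp add: field_simps)
  qed
  have "mu mumax qmin (qmin*mumax/(mumax-y)) = y" using assms by (simp add: mu_def field_simps)
  moreover have "qmin*mumax/(mumax-y) \<in> {qmin..}" using assms by (simp add: field_simps)
  ultimately show ?thesis unfolding mu_inv_def by (rule the_inv_into_f_eq[OF inj])
qed


lemma div_cancel: "(t::real) \<noteq> 0 \<Longrightarrow> (a/t)/(b/t) = a/b"
  by (simp add: divide_divide_eq_right)

lemma lt_aux: "(0::real) < t \<Longrightarrow> (A + B/t < s) = (0 < t*(s-A) - B)"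
  by (simp add: field_simps)

lemma mix_lt:
  fixes x y b u :: real
  assumes "x<b" "y<b" "0\<le>u" "u\<le>1"
  shows "(1-u)*x+u*y < b"
proof (cases "u=1")
  case True then show ?thesis using assms by simp
next
  case False
  then have "(1-u)*x < (1-u)*b" using assms by (intro mult_strict_left_mono) auto
  moreover have "u*y \<le> u*b" using assms by (intro mult_left_mono) auto
  ultimately show ?thesis by (simp add: algebra_simps)
qed

lemma mix_pos:
  fixes x y u :: real
  assumes "0<x" "0<y" "0\<le>u" "u\<le>1"
  shows "0 < (1-u)*x+u*y"
  using mix_lt[of "-x" 0 "-y" u] assms by (simp add: algebra_simps)

theorem proposition1:
  fixes s_in gamma beta phimax ks rhomax kv qmin mumax :: real
  assumes "0 < s_in" "0 < gamma" "0 < beta" "0 < phimax" "0 < ks"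
    "0 < rhomax" "0 < kv" "0 < qmin" "0 < mumax"
  defines "U \<equiv> U_set s_in gamma beta phimax ks rhomax kv qmin mumax"
    and "F \<equiv> f0_star s_in gamma beta phimax ks rhomax kv qmin mumax"
  shows "(\<forall>\<alpha>. convex {d. (\<alpha>, d) \<in> U}) \<and> (\<forall>d. convex {\<alpha>. (\<alpha>, d) \<in> U})
     \<and> (\<forall>(\<alpha>, d) \<in> U. F \<alpha> d > 0)
     \<and> (\<forall>\<alpha>. strictly_concave_on {d. (\<alpha>, d) \<in> U} (\<lambda>d. ln (F \<alpha> d)))
     \<and> (\<forall>d. strictly_concave_on {\<alpha>. (\<alpha>, d) \<in> U} (\<lambda>\<alpha>. ln (F \<alpha> d)))"
proof -
  note pos = assms(1-9)
  define c where "c = beta*gamma"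
  define K where "K = kv*qmin*mumax"
  define M where "M = rhomax*mumax"
  define R where "R = rhomax + qmin*mumax"
  define G where "G = (\<lambda>\<alpha> d. \<alpha>*c*(s_in - ks*d/(phimax*(1-\<alpha>) - d)) - K*d/(M - R*d))"
  have c: "0<c" and K: "0<K" and M: "0<M" and R: "0<R"
    using pos by (auto simp: c_def K_def M_def R_def add_pos_pos)
  have psimax: "psi_max mumax rhomax qmin = M/R"
    unfolding psi_max_def M_def R_def by simp
  have Mlt: "M < mumax*R" using pos unfolding M_def R_def by (simp add: algebra_simps)
  then have MRmu: "M/R < mumax" using R by (simp add: pos_divide_less_eq)
  have dmu_of: "z < mumax" if "R*z < M" for z
  proof -
    have "R*z < R*mumax" using that Mlt by (simp add: mult.commute)
    then show ?thesis using R by simp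
  qed
  have psi_inv_eq: "psi_inv rhomax kv mumax qmin d = K*d/(M-R*d)" if d: "0\<le>d" "d < M/R" for d
  proof -
    have dmu: "d < mumax" using d MRmu by simp
    have mi: "mu_inv mumax qmin d = qmin*mumax/(mumax-d)" using mu_inv_eq pos d dmu by simp
    have RdM: "R*d < M" using d R by (simp add: field_simps)
    have x0: "0 \<le> d*(qmin*mumax/(mumax-d))" using d dmu pos by simp
    have x1: "d*(qmin*mumax/(mumax-d)) < rhomax"
      using RdM dmu pos unfolding R_def M_def by (simp add: field_simps)
    have "psi_inv rhomax kv mumax qmin d = kv*(d*(qmin*mumax/(mumax-d)))/(rhomax - d*(qmin*mumax/(mumax-d)))"
      unfolding psi_inv_def mi using rho_inv_eq[OF pos(6,7) x0 x1] .
    also have "\<dots> = kv*(d*(qmin*mumax/(mumax-d)))/((M-R*d)/(mumax-d))"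
    proof -
      have "rhomax - d*(qmin*mumax/(mumax-d)) = (M-R*d)/(mumax-d)"
        using dmu unfolding M_def R_def by (simp add: field_simps)
      then show ?thesis by simp
    qed
    also have "\<dots> = K*d/(M-R*d)"
    proof -
      have "M - R*d \<noteq> 0" "mumax - d \<noteq> 0" using dmu RdM by auto
      have "kv*(d*(qmin*mumax/(mumax-d))) = (kv*d*qmin*mumax)/(mumax-d)" by simp
      then show ?thesis unfolding K_def using div_cancel[of "mumax-d"] \<open>mumax - d \<noteq> 0\<close>
        by (simp add: mult.assoc)
    qed
    finally show ?thesis .
  qed
  have memU: "(\<alpha>,d) \<in> U \<longleftrightarrow> 0<\<alpha> \<and> \<alpha><1 \<and> 0<d \<and> d<phimax*(1-\<alpha>) \<and> R*d<M \<and> 0 < G \<alpha> d" for \<alpha> d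
  proof -
    have "psi_alpha_inv gamma beta phimax ks rhomax kv qmin mumax \<alpha> d < s_in \<longleftrightarrow> 0 < G \<alpha> d"
      if h: "0<\<alpha>" "\<alpha><1" "0<d" "d<phimax*(1-\<alpha>)" "R*d<M"
    proof -
      have dR: "d < M/R" using h R by (simp add: field_simps)
      have y: "0 \<le> d/(1-\<alpha>)" "d/(1-\<alpha>) < phimax" using h by (auto simp: field_simps)
      have pe: "phi_inv phimax ks (d/(1-\<alpha>)) = ks*d/(phimax*(1-\<alpha>) - d)"
        proof -
        have n: "1-\<alpha> \<noteq> 0" "phimax*(1-\<alpha>) - d \<noteq> 0" using h by auto
        have e: "phimax - d/(1-\<alpha>) = (phimax*(1-\<alpha>)-d)/(1-\<alpha>)" using n by (simp add: field_simps)
        have "ks*(d/(1-\<alpha>))/((phimax*(1-\<alpha>)-d)/(1-\<alpha>)) = ks*d/(phimax*(1-\<alpha>)-d)"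
          using n by (simp add: divide_divide_eq_right)
        then show ?thesis using phi_inv_eq[OF pos(4,5) y] e by simp
      qed
      have "psi_alpha_inv gamma beta phimax ks rhomax kv qmin mumax \<alpha> d
          = ks*d/(phimax*(1-\<alpha>) - d) + K*d/(M-R*d)/(\<alpha>*c)"
        unfolding psi_alpha_inv_def pe psi_inv_eq[OF less_imp_le[OF h(3)] dR] using h c_def by (simp add: mult.assoc)
      moreover have "0 < \<alpha>*c" using h c by simp
      ultimately show ?thesis unfolding G_def by (simp only: lt_aux)
    qed
    moreover have "d < min ((1 - \<alpha>) * phimax) (psi_max mumax rhomax qmin) \<longleftrightarrow> d<phimax*(1-\<alpha>) \<and> R*d<M"
      unfolding psimax using R by (auto simp: field_simps)
    ultimately show ?thesis unfolding U_def U_set_def D_alpha_def by auto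
  qed
  have Feq: "F \<alpha> d = d*G \<alpha> d*(mumax-d)/(qmin*mumax)" if h: "(\<alpha>,d) \<in> U" for \<alpha> d
  proof -
    have h': "0<\<alpha>" "\<alpha><1" "0<d" "d<phimax*(1-\<alpha>)" "R*d<M" using h memU by auto
    have dR: "d < M/R" using h' R by (simp add: field_simps)
    have dmu: "d < mumax" using dR MRmu by simp
    have y: "0 \<le> d/(1-\<alpha>)" "d/(1-\<alpha>) < phimax" using h' by (auto simp: field_simps)
    have pe: "phi_inv phimax ks (d/(1-\<alpha>)) = ks*d/(phimax*(1-\<alpha>) - d)"
      proof -
      have n: "1-\<alpha> \<noteq> 0" "phimax*(1-\<alpha>) - d \<noteq> 0" using h' by auto
      have e: "phimax - d/(1-\<alpha>) = (phimax*(1-\<alpha>)-d)/(1-\<alpha>)" using n by (simp add: field_simps)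
      have "ks*(d/(1-\<alpha>))/((phimax*(1-\<alpha>)-d)/(1-\<alpha>)) = ks*d/(phimax*(1-\<alpha>)-d)"
        using n by (simp add: divide_divide_eq_right)
      then show ?thesis using phi_inv_eq[OF pos(4,5) y] e by simp
    qed
    have mi: "mu_inv mumax qmin d = qmin*mumax/(mumax-d)" using mu_inv_eq pos h' dmu by simp
    have "v_in_star s_in gamma beta phimax ks \<alpha> d - psi_inv rhomax kv mumax qmin d = G \<alpha> d"
      unfolding v_in_star_def pe psi_inv_eq[OF less_imp_le[OF h'(3)] dR] G_def c_def using h' by (simp add: mult.assoc)
    then show ?thesis unfolding F_def f0_star_def mi using dmu pos by (simp add: field_simps)
  qed
  have Fpos: "0 < F \<alpha> d" if h: "(\<alpha>,d) \<in> U" for \<alpha> d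
  proof -
    have h': "0<d" "R*d<M" "0 < G \<alpha> d" using h memU by auto
    have "R*d < R*mumax" using h'(2) Mlt by (simp add: mult.commute)
    then have dmu: "d < mumax" using R by simp
    show ?thesis unfolding Feq[OF h] using h' dmu pos by simp
  qed
  have lnF: "ln (F \<alpha> d) = ln d + ln (G \<alpha> d) + ln (mumax - d) - ln (qmin*mumax)" if h: "(\<alpha>,d) \<in> U" for \<alpha> d
  proof -
    have h': "0<d" "R*d<M" "0 < G \<alpha> d" using h memU by auto
    have "R*d < R*mumax" using h'(2) Mlt by (simp add: mult.commute)
    then have dmu: "d < mumax" using R by simp
    show ?thesis unfolding Feq[OF h] using h' dmu pos by (simp add: ln_div ln_mult)
  qed
  have Gd: "(1-u)*G \<alpha> d1 + u*G \<alpha> d2 \<le> G \<alpha> ((1-u)*d1+u*d2)"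
    if h: "0<\<alpha>" "\<alpha><1" "d1 < phimax*(1-\<alpha>)" "d2 < phimax*(1-\<alpha>)" "R*d1<M" "R*d2<M"
       "0\<le>u" "u\<le>1" for \<alpha> d1 d2 u
  proof -
    define a where "a = phimax*(1-\<alpha>)"
    have a: "0<a" using h pos by (simp add: a_def)
    have Gf: "G \<alpha> d = \<alpha>*c*(s_in) - (\<alpha>*c*ks)*(d/(a - 1*d)) - K*(d/(M-R*d))" for d
      unfolding G_def a_def by (simp add: right_diff_distrib mult.assoc)
    let ?m = "(1-u)*d1+u*d2"
    have T: "?m/(a - 1*?m) \<le> (1-u)*(d1/(a-1*d1)) + u*(d2/(a-1*d2))"
      using h a by (intro lf_conv) (auto simp: a_def)
    have S: "?m/(M - R*?m) \<le> (1-u)*(d1/(M-R*d1)) + u*(d2/(M-R*d2))"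
      using h M R by (intro lf_conv) auto
    have cp: "0 \<le> \<alpha>*c*ks" using h c pos by simp
    have T': "(\<alpha>*c*ks)*(?m/(a - 1*?m)) \<le> (\<alpha>*c*ks)*((1-u)*(d1/(a-1*d1)) + u*(d2/(a-1*d2)))"
      using mult_left_mono[OF T cp] .
    have S': "K*(?m/(M - R*?m)) \<le> K*((1-u)*(d1/(M-R*d1)) + u*(d2/(M-R*d2)))"
      using mult_left_mono[OF S] K by simp
    have e: "(1-u)*G \<alpha> d1 + u*G \<alpha> d2 = \<alpha>*c*(s_in) - (\<alpha>*c*ks)*((1-u)*(d1/(a-1*d1)) + u*(d2/(a-1*d2)))
        - K*((1-u)*(d1/(M-R*d1)) + u*(d2/(M-R*d2)))"
      unfolding Gf by (simp add: algebra_simps)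
    show ?thesis unfolding e Gf[of ?m] using T' S' by linarith
  qed
  have Ga: "(1-u)*G a1 d + u*G a2 d < G ((1-u)*a1+u*a2) d"
    if h: "0<d" "0<a1" "0<a2" "d < phimax*(1-a1)" "d < phimax*(1-a2)" "a1\<noteq>a2" "0<u" "u<1" for a1 a2 d u
  proof -
    define p where "p = phimax - d"
    have "0 < phimax*a1" using pos h by simp
    moreover have "phimax*(1-a1) = phimax - phimax*a1" by (simp add: algebra_simps)
    ultimately have p: "0<p" using h(4) unfolding p_def by linarith
    have Gf: "G a d = c*(s_in)*a - (c*ks*d)*(a/(p - phimax*a)) - K*d/(M-R*d)" for a
    proof -
      have "phimax*(1-a) - d = p - phimax*a" unfolding p_def by (simp add: algebra_simps)
      then show ?thesis unfolding G_def by (simp add: algebra_simps)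
    qed
    let ?m = "(1-u)*a1+u*a2"
    have T: "?m/(p - phimax*?m) < (1-u)*(a1/(p-phimax*a1)) + u*(a2/(p-phimax*a2))"
      using h p pos by (intro lf_strict) (auto simp: p_def algebra_simps)
    have cp: "0 < c*ks*d" using h c pos by simp
    have T': "(c*ks*d)*(?m/(p - phimax*?m)) < (c*ks*d)*((1-u)*(a1/(p-phimax*a1)) + u*(a2/(p-phimax*a2)))"
      using mult_strict_left_mono[OF T cp] .
    have e: "(1-u)*G a1 d + u*G a2 d = c*(s_in)*?m - (c*ks*d)*((1-u)*(a1/(p-phimax*a1)) + u*(a2/(p-phimax*a2)))
        - K*d/(M-R*d)"
      unfolding Gf by (simp add: algebra_simps add_divide_distrib[symmetric])
    show ?thesis unfolding e Gf[of ?m] using T' by linarith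
  qed
  have memd: "(\<alpha>, (1-u)*d1+u*d2) \<in> U" if h: "(\<alpha>,d1)\<in>U" "(\<alpha>,d2)\<in>U" "0\<le>u" "u\<le>1" for \<alpha> d1 d2 u
  proof -
    have h1: "0<\<alpha>" "\<alpha><1" "0<d1" "d1<phimax*(1-\<alpha>)" "R*d1<M" "0 < G \<alpha> d1" using h(1) memU by auto
    have h2: "0<d2" "d2<phimax*(1-\<alpha>)" "R*d2<M" "0 < G \<alpha> d2" using h(2) memU by auto
    have "R*((1-u)*d1+u*d2) = (1-u)*(R*d1)+u*(R*d2)" by (simp add: algebra_simps)
    moreover have "(1-u)*(R*d1)+u*(R*d2) < M" using h1 h2 h by (intro mix_lt) auto
    moreover have "0 < (1-u)*d1+u*d2" using h1 h2 h by (intro mix_pos) auto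
    moreover have "(1-u)*d1+u*d2 < phimax*(1-\<alpha>)" using h1 h2 h by (intro mix_lt) auto
    moreover have "0 < (1-u)*G \<alpha> d1 + u*G \<alpha> d2" using h1 h2 h by (intro mix_pos) auto
    moreover have "(1-u)*G \<alpha> d1 + u*G \<alpha> d2 \<le> G \<alpha> ((1-u)*d1+u*d2)"
      using h1 h2 h by (intro Gd) auto
    ultimately show ?thesis using memU h1 by simp
  qed
  have mema: "((1-u)*a1+u*a2, d) \<in> U \<and> (a1 \<noteq> a2 \<longrightarrow> 0<u \<longrightarrow> u<1 \<longrightarrow>
      (1-u)*G a1 d + u*G a2 d < G ((1-u)*a1+u*a2) d)"
    if h: "(a1,d)\<in>U" "(a2,d)\<in>U" "0\<le>u" "u\<le>1" for a1 a2 d u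
  proof -
    let ?m = "(1-u)*a1+u*a2"
    have h1: "0<a1" "a1<1" "0<d" "d<phimax*(1-a1)" "R*d<M" "0 < G a1 d" using h(1) memU by auto
    have h2: "0<a2" "a2<1" "d<phimax*(1-a2)" "0 < G a2 d" using h(2) memU by auto
    have e: "phimax*(1-a) = phimax - phimax*a" for a by (simp add: algebra_simps)
    have "phimax*?m = (1-u)*(phimax*a1)+u*(phimax*a2)" by (simp add: algebra_simps)
    moreover have "(1-u)*(phimax*a1)+u*(phimax*a2) < phimax - d"
    proof (rule mix_lt)
      show "phimax*a1 < phimax - d" using h1(4) e[of a1] by linarith
      show "phimax*a2 < phimax - d" using h2(3) e[of a2] by linarith
    qed (use h in auto)
    ultimately have dm: "d < phimax*(1-?m)" using e[of ?m] by linarith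
    have m0: "0 < ?m" "?m < 1" using h1 h2 h by (auto intro: mix_pos mix_lt)
    have st: "(1-u)*G a1 d + u*G a2 d < G ?m d" if "a1 \<noteq> a2" "0<u" "u<1"
      using h1 h2 that by (intro Ga) auto
    have "0 < G ?m d"
    proof (cases "a1 \<noteq> a2 \<and> 0<u \<and> u<1")
      case True
      have "0 < (1-u)*G a1 d + u*G a2 d" using h1 h2 h by (intro mix_pos) auto
      then show ?thesis using st True by linarith
    next
      case False
      then have "a1 = a2 \<or> u = 0 \<or> u = 1" using h by linarith
      have same: "(1-u)*a+u*a = a" for a :: real by (simp add: algebra_simps)
      show ?thesis using \<open>a1 = a2 \<or> u = 0 \<or> u = 1\<close> h1 h2 same[of a2] by auto
    qed
    then show ?thesis using memU h1 dm m0 st by simp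
  qed
  have cd: "convex {d. (\<alpha>, d) \<in> U}" for \<alpha>
    unfolding convex_alt using memd by simp
  have ca: "convex {\<alpha>. (\<alpha>, d) \<in> U}" for d
    unfolding convex_alt using mema by simp
  have sd: "strictly_concave_on {d. (\<alpha>, d) \<in> U} (\<lambda>d. ln (F \<alpha> d))" for \<alpha>
    unfolding strictly_concave_on_def
  proof (intro conjI cd ballI impI allI)
    fix x y u :: real assume x: "x \<in> {d. (\<alpha>, d) \<in> U}" and y: "y \<in> {d. (\<alpha>, d) \<in> U}" and xy: "x \<noteq> y"
      and u: "0 < u \<and> u < 1"
    let ?m = "(1-u)*x+u*y"
    have hx: "(\<alpha>,x)\<in>U" and hy: "(\<alpha>,y)\<in>U" using x y by auto
    have hm: "(\<alpha>,?m)\<in>U" using memd hx hy u by simp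
    have px: "0<x" "R*x<M" "0 < G \<alpha> x" using hx memU by auto
    have py: "0<y" "R*y<M" "0 < G \<alpha> y" using hy memU by auto
    have xmu: "x < mumax" "y < mumax" using px py dmu_of by auto
    have a: "(1-u)*ln x + u*ln y < ln ?m" using ln_strict px py xy u by simp
    have b1: "(1-u)*ln (G \<alpha> x) + u*ln (G \<alpha> y) \<le> ln ((1-u)*G \<alpha> x + u*G \<alpha> y)"
      using ln_conc px py u by simp
    have b2: "(1-u)*G \<alpha> x + u*G \<alpha> y \<le> G \<alpha> ?m" using memU hx hy u by (intro Gd) auto
    have b3: "0 < (1-u)*G \<alpha> x + u*G \<alpha> y" using px py u by (intro mix_pos) auto
    have b: "(1-u)*ln (G \<alpha> x) + u*ln (G \<alpha> y) \<le> ln (G \<alpha> ?m)"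
      using b1 b2 b3 by (smt (verit) ln_le_cancel_iff)
    have c1: "(1-u)*ln (mumax-x) + u*ln (mumax-y) \<le> ln ((1-u)*(mumax-x)+u*(mumax-y))"
      using ln_conc xmu u by simp
    have c2: "(1-u)*(mumax-x)+u*(mumax-y) = mumax - ?m" by (simp add: algebra_simps)
    have "(1-u) * ln (F \<alpha> x) + u * ln (F \<alpha> y) =
        ((1-u)*ln x + u*ln y) + ((1-u)*ln (G \<alpha> x) + u*ln (G \<alpha> y)) + ((1-u)*ln (mumax-x) + u*ln (mumax-y))
        - ln (qmin*mumax)"
      unfolding lnF[OF hx] lnF[OF hy] by (simp add: algebra_simps)
    also have "\<dots> < ln ?m + ln (G \<alpha> ?m) + ln (mumax - ?m) - ln (qmin*mumax)"
      using a b c1[unfolded c2] by linarith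
    also have "\<dots> = ln (F \<alpha> ?m)" using lnF[OF hm] by simp
    finally show "(1-u) * ln (F \<alpha> x) + u * ln (F \<alpha> y) < ln (F \<alpha> ?m)" .
  qed
  have sa: "strictly_concave_on {\<alpha>. (\<alpha>, d) \<in> U} (\<lambda>\<alpha>. ln (F \<alpha> d))" for d
    unfolding strictly_concave_on_def
  proof (intro conjI ca ballI impI allI)
    fix x y u :: real assume x: "x \<in> {\<alpha>. (\<alpha>, d) \<in> U}" and y: "y \<in> {\<alpha>. (\<alpha>, d) \<in> U}" and xy: "x \<noteq> y"
      and u: "0 < u \<and> u < 1"
    let ?m = "(1-u)*x+u*y"
    have hx: "(x,d)\<in>U" and hy: "(y,d)\<in>U" using x y by auto
    have hm: "(?m,d)\<in>U" and st: "(1-u)*G x d + u*G y d < G ?m d" using mema[OF hx hy] u xy by auto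
    have px: "0 < G x d" and py: "0 < G y d" using hx hy memU by auto
    have b1: "(1-u)*ln (G x d) + u*ln (G y d) \<le> ln ((1-u)*G x d + u*G y d)"
      using ln_conc px py u by simp
    have b3: "0 < (1-u)*G x d + u*G y d" using px py u by (intro mix_pos) auto
    have b: "(1-u)*ln (G x d) + u*ln (G y d) < ln (G ?m d)"
      using b1 st b3 by (smt (verit) ln_less_cancel_iff)
    have "(1-u) * ln (F x d) + u * ln (F y d) =
        ln d + ((1-u)*ln (G x d) + u*ln (G y d)) + ln (mumax-d) - ln (qmin*mumax)"
      unfolding lnF[OF hx] lnF[OF hy] by (simp add: algebra_simps)
    also have "\<dots> < ln d + ln (G ?m d) + ln (mumax-d) - ln (qmin*mumax)"
      using b by linarith
    also have "\<dots> = ln (F ?m d)" using lnF[OF hm] by simp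
    finally show "(1-u) * ln (F x d) + u * ln (F y d) < ln (F ?m d)" .
  qed
  show ?thesis using cd ca sd sa Fpos by auto
qed

end
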